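(* Let $S$ be as in the context, $1\le k<n$, and let $\zeta\in\mathcal{T}_k(S)$ be a node that has exactly one child $\phi$. (1) If $\zeta$ has a unique Weiner link, then $w_{k+1}(\phi)=1$. (2) If $\zeta$ has multiple Weiner links, then $w_{k+1}(\phi)=w_k(\zeta)$.
   Context: $\Sigma$ is a finite totally ordered alphabet containing a symbol $\$$ smaller than every other symbol. $S$ is a string of length $n\ge 2$ over $\Sigma$ whose last character is $\$$ and in which $\$$ occurs nowhere else. The rotations of $S$ are the $n$ strings $S[i..n]S[1..i-1]$, $i\in[1,n]$. The rotation-trie $\mathcal{T}(S)$ is the trie of the set of rotations of $S$ (a rooted tree with single-character edge labels, children of a node having distinct labels, ordered by increasing label). The label $l(\phi)$ of a node is the concatenation of edge labels on the root-to-$\phi$ path, its level is $|l(\phi)|$, leaves are the nodes at level $n$, $|\phi|$ is the number of leaves in the subtree rooted at $\phi$, and $\mathcal{T}_k(S)$ is the set of nodes at level $k$. Siblings are distinct nodes with the same parent. A triple $(\phi,\varphi,c)$ is a Weiner link of $\phi$ if $l(\varphi)=c\,l(\phi)$, or $|l(\phi)|=n$ and $l(\varphi)=c\,l(\phi)[1..n-1]$. $\phi$ has a unique Weiner link if all its Weiner links have the same target node, and multiple Weiner links otherwise. For $\phi\in\mathcal{T}_k(S)$ define $w_k(\phi)=1$ if $\phi$ has a unique Weiner link $(\phi,\varphi,c)$ and $\varphi$ has no siblings, and $w_k(\phi)=|\phi|$ otherwise. *)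

theory Defs
  imports Main "HOL-Library.Sublist"
begin

text \<open>Strings are lists; the alphabet is the type 'a (finite, linearly ordered).
  Nodes of the rotation trie are identified with their labels.\<close>

definition rotations :: "'a list \<Rightarrow> 'a list set" where
  "rotations S = {drop i S @ take i S | i. i < length S}"

definition trie_nodes :: "'a list \<Rightarrow> 'a list set" where
  "trie_nodes S = {p. \<exists>r \<in> rotations S. prefix p r}"

definition trie_level :: "'a list \<Rightarrow> nat \<Rightarrow> 'a list set" where
  "trie_level S k = {p \<in> trie_nodes S. length p = k}"

definition leaf_count :: "'a list \<Rightarrow> 'a list \<Rightarrow> nat" where
  "leaf_count S p = card {q \<in> trie_nodes S. length q = length S \<and> prefix p q}"

definition children :: "'a list \<Rightarrow> 'a list \<Rightarrow> 'a list set" where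
  "children S p = {q \<in> trie_nodes S. \<exists>c. q = p @ [c]}"

definition has_siblings :: "'a list \<Rightarrow> 'a list \<Rightarrow> bool" where
  "has_siblings S q \<longleftrightarrow> q \<noteq> [] \<and>
     (\<exists>q' \<in> trie_nodes S. q' \<noteq> [] \<and> q' \<noteq> q \<and> butlast q' = butlast q)"

definition weiner_link :: "'a list \<Rightarrow> 'a list \<Rightarrow> 'a list \<Rightarrow> 'a \<Rightarrow> bool" where
  "weiner_link S p q c \<longleftrightarrow> p \<in> trie_nodes S \<and> q \<in> trie_nodes S \<and>
     (q = c # p \<or> (length p = length S \<and> q = c # butlast p))"

definition unique_weiner :: "'a list \<Rightarrow> 'a list \<Rightarrow> bool" where
  "unique_weiner S p \<longleftrightarrow>
     (\<forall>q c q' c'. weiner_link S p q c \<and> weiner_link S p q' c' \<longrightarrow> q = q')"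

definition multiple_weiner :: "'a list \<Rightarrow> 'a list \<Rightarrow> bool" where
  "multiple_weiner S p \<longleftrightarrow> \<not> unique_weiner S p"

text \<open>w_k(p) for p at level k (the value does not depend on k beyond p's level).\<close>
definition wk :: "'a list \<Rightarrow> nat \<Rightarrow> 'a list \<Rightarrow> nat" where
  "wk S k p = (if unique_weiner S p \<and> (\<exists>q c. weiner_link S p q c \<and> \<not> has_siblings S q)
               then 1 else leaf_count S p)"

end

theory Submission
  imports Defs "HOL-Library.Multiset"
begin

lemma rot_in: "S \<noteq> [] \<Longrightarrow> rotate i S \<in> rotations S"
  unfolding rotations_def rotate_drop_take by auto

lemma rot_cases: assumes "r \<in> rotations S" shows "\<exists>i. r = rotate i S"
proof -
  obtain i where "i < length S" "r = drop i S @ take i S" using assms unfolding rotations_def by blast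
  hence "r = rotate i S" by (simp add: rotate_drop_take)
  thus ?thesis by blast
qed

lemma rot_len: "r \<in> rotations S \<Longrightarrow> length r = length S"
  unfolding rotations_def by auto

lemma rot_mset: assumes "r \<in> rotations S" shows "mset r = mset S"
proof -
  obtain i where "r = drop i S @ take i S" using assms unfolding rotations_def by blast
  moreover have "mset S = mset (take i S) + mset (drop i S)" by (metis append_take_drop_id mset_append)
  ultimately show ?thesis by (simp add: add.commute)
qed

lemma rot_next: assumes "x # r' \<in> rotations S" shows "r' @ [x] \<in> rotations S"
proof -
  obtain i where "x # r' = rotate i S" using rot_cases[OF assms] by blast
  hence "r' @ [x] = rotate (Suc i) S"
    by (metis rotate1.simps(2) rotate_Suc)
  moreover have "S \<noteq> []" using assms rot_len by fastforce
  hence "rotate (Suc i) S \<in> rotations S" by (rule rot_in)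
  ultimately show ?thesis by simp
qed

lemma rot_prev: assumes "r \<in> rotations S" "r \<noteq> []"
  shows "last r # butlast r \<in> rotations S"
proof -
  obtain i where i: "r = rotate i S" using rot_cases[OF assms(1)] by blast
  let ?r = "last r # butlast r"
  have "rotate 1 ?r = r" using assms(2) by simp
  hence "rotate (length S - 1) r = rotate (length S - 1 + 1) ?r" by (metis rotate_rotate)
  also have "\<dots> = ?r" using assms rot_len[OF assms(1)]
    by (intro rotate_id) simp
  finally have "?r = rotate (length S - 1 + i) S" using i by (simp add: rotate_rotate)
  moreover have "S \<noteq> []" using assms rot_len by fastforce
  ultimately show ?thesis using rot_in by simp
qed

lemma N1: assumes "p \<in> trie_nodes S" shows "length p \<le> length S"
proof -
  obtain r where r: "r \<in> rotations S" "prefix p r" using assms unfolding trie_nodes_def by blast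
  show ?thesis using prefix_length_le[OF r(2)] rot_len[OF r(1)] by simp
qed

lemma N2: assumes "x # p \<in> trie_nodes S" shows "p \<in> trie_nodes S"
proof -
  obtain r where r: "r \<in> rotations S" "prefix (x # p) r" using assms unfolding trie_nodes_def by blast
  then obtain r' where "r = x # r'" "prefix p r'" by (cases r) auto
  hence "r' @ [x] \<in> rotations S" "prefix p (r' @ [x])" using r rot_next by auto
  thus ?thesis unfolding trie_nodes_def by blast
qed

lemma N6: assumes "p @ q \<in> trie_nodes S" shows "p \<in> trie_nodes S"
proof -
  obtain r where r: "r \<in> rotations S" "prefix (p @ q) r" using assms unfolding trie_nodes_def by blast
  hence "prefix p r" unfolding prefix_def by auto
  thus ?thesis using r(1) unfolding trie_nodes_def by blast
qed

lemma N3: assumes "p \<in> trie_nodes S" "length p < length S" shows "\<exists>e. p @ [e] \<in> trie_nodes S"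
proof -
  obtain r where r: "r \<in> rotations S" "prefix p r" using assms unfolding trie_nodes_def by blast
  then obtain t where t: "r = p @ t" by (auto simp: prefix_def)
  have "t \<noteq> []" using t rot_len[OF r(1)] assms(2) by auto
  then obtain e t' where "t = e # t'" by (cases t) auto
  hence "prefix (p @ [e]) r" using t by simp
  thus ?thesis using r unfolding trie_nodes_def by blast
qed

lemma N4: assumes "p \<in> trie_nodes S" "length p < length S" shows "\<exists>d. d # p \<in> trie_nodes S"
proof -
  obtain r where r: "r \<in> rotations S" "prefix p r" using assms unfolding trie_nodes_def by blast
  have ne: "r \<noteq> []" using rot_len[OF r(1)] assms(2) by auto
  have "p \<noteq> r" using rot_len[OF r(1)] assms(2) by auto
  moreover have "prefix p (butlast r @ [last r])" using r(2) ne by simp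
  ultimately have "prefix p (butlast r)" using ne unfolding prefix_snoc by auto
  hence "prefix (last r # p) (last r # butlast r)" by simp
  thus ?thesis using rot_prev[OF r(1) ne] unfolding trie_nodes_def by blast
qed

lemma N5: assumes "p \<in> trie_nodes S" "length p = length S" shows "p \<in> rotations S"
proof -
  obtain r where r: "r \<in> rotations S" "prefix p r" using assms unfolding trie_nodes_def by blast
  thus ?thesis using rot_len[OF r(1)] assms(2) by (auto simp: prefix_def)
qed

lemma N7: assumes "p \<in> trie_nodes S" "q \<in> trie_nodes S" "length p = length S" "length q = length S"
  "butlast p = butlast q" "p \<noteq> []" shows "p = q"
proof -
  have "mset p = mset q" using N5 assms rot_mset by metis
  have q: "q \<noteq> []" using assms by auto
  have "mset (butlast p @ [last p]) = mset p" using assms(6) by simp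
  moreover have "mset (butlast q @ [last q]) = mset q" using q by simp
  ultimately have "add_mset (last p) (mset (butlast p)) = add_mset (last q) (mset (butlast q))"
    using \<open>mset p = mset q\<close> by simp
  hence "last p = last q" using assms(5) by simp
  thus ?thesis using assms(5,6) q by (metis append_butlast_last_id)
qed

theorem mainTheorem5:
  fixes S :: "('a::{linorder,finite}) list" and dollar :: 'a
    and k :: nat and \<zeta> \<phi> :: "'a list"
  assumes "length S \<ge> 2"
    and "\<forall>x. x \<noteq> dollar \<longrightarrow> dollar < x"
    and "last S = dollar"
    and "dollar \<notin> set (butlast S)"
    and "1 \<le> k" and "k < length S"
    and "\<zeta> \<in> trie_level S k"
    and "children S \<zeta> = {\<phi>}"
  shows "(unique_weiner S \<zeta> \<longrightarrow> wk S (k+1) \<phi> = 1)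
       \<and> (multiple_weiner S \<zeta> \<longrightarrow> wk S (k+1) \<phi> = wk S k \<zeta>)"
proof -
  let ?n = "length S"
  let ?N = "trie_nodes S"
  have zN: "\<zeta> \<in> ?N" and zl: "length \<zeta> = k" using assms(7) unfolding trie_level_def by auto
  have "\<phi> \<in> children S \<zeta>" using assms(8) by auto
  then obtain c where phi: "\<phi> = \<zeta> @ [c]" and pN: "\<phi> \<in> ?N" unfolding children_def by auto
  have onlyc: "\<And>e. \<zeta> @ [e] \<in> ?N \<Longrightarrow> e = c"
  proof -
    fix e assume "\<zeta> @ [e] \<in> ?N"
    hence "\<zeta> @ [e] \<in> children S \<zeta>" unfolding children_def by auto
    thus "e = c" using assms(8) phi by auto
  qed
  have ext: "\<And>d. d # \<zeta> \<in> ?N \<Longrightarrow> k + 1 < ?n \<Longrightarrow> d # \<phi> \<in> ?N"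
  proof -
    fix d assume a: "d # \<zeta> \<in> ?N" "k + 1 < ?n"
    then obtain e where "(d # \<zeta>) @ [e] \<in> ?N" using N3[of "d # \<zeta>" S] zl by auto
    moreover hence "\<zeta> @ [e] \<in> ?N" using N2 by (metis append_Cons)
    ultimately show "d # \<phi> \<in> ?N" using onlyc phi by auto
  qed
  have wlz: "\<And>q d. weiner_link S \<zeta> q d \<longleftrightarrow> q = d # \<zeta> \<and> d # \<zeta> \<in> ?N"
    unfolding weiner_link_def using zN zl assms(6) by auto
  have wlp: "\<And>q d. weiner_link S \<phi> q d \<longleftrightarrow>
     (if k + 1 < ?n then q = d # \<phi> \<and> d # \<phi> \<in> ?N else q = d # \<zeta> \<and> d # \<zeta> \<in> ?N)"
  proof -
    fix q d
    show "weiner_link S \<phi> q d \<longleftrightarrow>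
     (if k + 1 < ?n then q = d # \<phi> \<and> d # \<phi> \<in> ?N else q = d # \<zeta> \<and> d # \<zeta> \<in> ?N)"
    proof (cases "k + 1 < ?n")
      case True
      then show ?thesis unfolding weiner_link_def using pN phi zl by auto
    next
      case False
      hence "k + 1 = ?n" using assms(6) by auto
      moreover have "d # \<phi> \<notin> ?N" using N1[of "d # \<phi>" S] phi zl \<open>k + 1 = ?n\<close> by auto
      ultimately show ?thesis unfolding weiner_link_def using pN phi zl by auto
    qed
  qed
  have uz: "unique_weiner S \<zeta> \<longleftrightarrow> (\<forall>d d'. d # \<zeta> \<in> ?N \<and> d' # \<zeta> \<in> ?N \<longrightarrow> d = d')"
    unfolding unique_weiner_def wlz by auto
  obtain d0 where d0: "d0 # \<zeta> \<in> ?N" using N4[OF zN] zl assms(6) by auto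
  have P1: "wk S (k+1) \<phi> = 1" if U: "unique_weiner S \<zeta>"
  proof -
    have uq: "\<And>d d'. d # \<zeta> \<in> ?N \<Longrightarrow> d' # \<zeta> \<in> ?N \<Longrightarrow> d = d'" using U uz by blast
    show ?thesis
    proof (cases "k + 1 < ?n")
      case True
      have up: "unique_weiner S \<phi>"
        unfolding unique_weiner_def wlp using True uq N6 phi
        by (metis append_Cons)
      have l: "weiner_link S \<phi> (d0 # \<phi>) d0" using wlp True ext d0 by auto
      have "\<not> has_siblings S (d0 # \<phi>)"
      proof
        assume "has_siblings S (d0 # \<phi>)"
        then obtain q' where q': "q' \<in> ?N" "q' \<noteq> []" "q' \<noteq> d0 # \<phi>" "butlast q' = d0 # \<zeta>"
          unfolding has_siblings_def using phi by auto
        hence "q' = d0 # \<zeta> @ [last q']" by (metis append_butlast_last_id append_Cons)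
        hence "\<zeta> @ [last q'] \<in> ?N" using q'(1) N2 by metis
        hence "last q' = c" using onlyc by blast
        thus False using q' \<open>q' = d0 # \<zeta> @ [last q']\<close> phi by auto
      qed
      thus ?thesis unfolding wk_def using up l by auto
    next
      case False
      hence kn: "k + 1 = ?n" using assms(6) by auto
      have up: "unique_weiner S \<phi>"
        unfolding unique_weiner_def wlp using False uq by auto
      have l: "weiner_link S \<phi> (d0 # \<zeta>) d0" using wlp False d0 by auto
      have "\<not> has_siblings S (d0 # \<zeta>)"
      proof
        assume "has_siblings S (d0 # \<zeta>)"
        then obtain q' where q': "q' \<in> ?N" "q' \<noteq> []" "q' \<noteq> d0 # \<zeta>" "butlast q' = butlast (d0 # \<zeta>)"
          unfolding has_siblings_def by auto
        have "length q' = ?n" using q'(2,4) zl kn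
          by (metis length_butlast length_Cons Suc_eq_plus1 diff_Suc_1 length_greater_0_conv Suc_pred)
        moreover have "length (d0 # \<zeta>) = ?n" using zl kn by simp
        ultimately have "d0 # \<zeta> = q'" using N7[OF d0 q'(1)] q'(4) by auto
        thus False using q'(3) by simp
      qed
      thus ?thesis unfolding wk_def using up l by auto
    qed
  qed
  have P2: "wk S (k+1) \<phi> = wk S k \<zeta>" if M: "multiple_weiner S \<zeta>"
  proof -
    from M obtain d1 d2 where d: "d1 # \<zeta> \<in> ?N" "d2 # \<zeta> \<in> ?N" "d1 \<noteq> d2"
      unfolding multiple_weiner_def uz by blast
    have "\<not> unique_weiner S \<phi>"
    proof (cases "k + 1 < ?n")
      case True
      have "weiner_link S \<phi> (d1 # \<phi>) d1" "weiner_link S \<phi> (d2 # \<phi>) d2"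
        using wlp True ext d by auto
      thus ?thesis unfolding unique_weiner_def using d(3) by blast
    next
      case False
      have "weiner_link S \<phi> (d1 # \<zeta>) d1" "weiner_link S \<phi> (d2 # \<zeta>) d2"
        using wlp False d by auto
      thus ?thesis unfolding unique_weiner_def using d(3) by blast
    qed
    hence "wk S (k+1) \<phi> = leaf_count S \<phi>" unfolding wk_def by auto
    also have "\<dots> = leaf_count S \<zeta>"
    proof -
      have "{q \<in> ?N. length q = ?n \<and> prefix \<phi> q} = {q \<in> ?N. length q = ?n \<and> prefix \<zeta> q}"
      proof (intro set_eqI iffI)
        fix q assume "q \<in> {q \<in> ?N. length q = ?n \<and> prefix \<phi> q}"
        thus "q \<in> {q \<in> ?N. length q = ?n \<and> prefix \<zeta> q}" using phi
          unfolding prefix_def by auto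
      next
        fix q assume q: "q \<in> {q \<in> ?N. length q = ?n \<and> prefix \<zeta> q}"
        then obtain t where t: "q = \<zeta> @ t" by (auto simp: prefix_def)
        have "t \<noteq> []" using t q zl assms(6) by auto
        then obtain e t' where "t = e # t'" by (cases t) auto
        hence "(\<zeta> @ [e]) @ t' \<in> ?N" using q t by auto
        hence "e = c" using N6 onlyc by blast
        thus "q \<in> {q \<in> ?N. length q = ?n \<and> prefix \<phi> q}" using q t \<open>t = e # t'\<close> phi by auto
      qed
      thus ?thesis unfolding leaf_count_def by simp
    qed
    also have "\<dots> = wk S k \<zeta>" using M unfolding wk_def multiple_weiner_def by auto
    finally show ?thesis .
  qed
  show ?thesis using P1 P2 by blast
qed

end
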